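(* Let $\{(R_n,B_n)\}_{n=1}^\infty\subseteq\mathcal{D}_d$ and let $\nu=\delta_{R_1^{-1}B_1}*\delta_{(R_2R_1)^{-1}B_2}*\cdots*\delta_{(R_n\cdots R_1)^{-1}B_n}*\cdots$ be the corresponding infinite convolution. Then $\mathcal{Z}(\nu)=\emptyset$.
   Context: $\mathcal{D}_d$ is the set of pairs $(R,B)$ with $R=\mathrm{diag}(m_1,\dots,m_d)$, $m_1,\dots,m_d\ge2$ integers, and $B$ a nonempty subset of $\{0,\dots,m_1-1\}\times\cdots\times\{0,\dots,m_d-1\}$. For finite $A$, $\delta_A=\frac{1}{\#A}\sum_{a\in A}\delta_a$; the infinite convolution is the weak limit (which exists for sequences in $\mathcal{D}_d$) of the finite convolutions $\delta_{R_1^{-1}B_1}*\cdots*\delta_{(R_n\cdots R_1)^{-1}B_n}$. $\mathcal{Z}(\nu)=\{\xi\in\mathbb{R}^d:\widehat{\nu}(\xi+k)=0\text{ for all }k\in\mathbb{Z}^d\}$ where $\widehat{\nu}(\xi)=\int e^{-2\pi i\xi\cdot x}d\nu(x)$. *)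

theory Defs
  imports "HOL-Probability.Probability"
begin

text \<open>Dimension d is the cardinality of the finite index type 'n.
  The pair (R_k, B_k) is given by digits m k i (R_k = diag(m k i)) and a digit set
  B k of integer vectors (as nat vectors). Indices k start at 1.\<close>

definition in_D :: "(nat \<Rightarrow> 'n::finite \<Rightarrow> nat) \<Rightarrow> (nat \<Rightarrow> (nat ^ 'n) set) \<Rightarrow> nat \<Rightarrow> bool" where
  "in_D m B k \<longleftrightarrow> (\<forall>i. m k i \<ge> 2) \<and> B k \<noteq> {} \<and> (\<forall>b\<in>B k. \<forall>i. b $ i < m k i)"

definition scaled_pt :: "(nat \<Rightarrow> 'n::finite \<Rightarrow> nat) \<Rightarrow> nat \<Rightarrow> nat ^ 'n \<Rightarrow> real ^ 'n" where
  "scaled_pt m k b = (\<chi> i. real (b $ i) / (\<Prod>j\<in>{1..k}. real (m j i)))"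

text \<open>Finite convolution delta_{R_1^{-1}B_1} * ... * delta_{(R_k...R_1)^{-1}B_k} as a pmf;
  delta_A is the uniform distribution pmf_of_set A on the finite set A.\<close>
fun fin_conv :: "(nat \<Rightarrow> 'n::finite \<Rightarrow> nat) \<Rightarrow> (nat \<Rightarrow> (nat ^ 'n) set) \<Rightarrow> nat \<Rightarrow> (real ^ 'n) pmf" where
  "fin_conv m B 0 = return_pmf 0"
| "fin_conv m B (Suc k) =
     map_pmf (\<lambda>(x, y). x + y)
       (pair_pmf (fin_conv m B k) (pmf_of_set (scaled_pt m (Suc k) ` B (Suc k))))"

definition weak_conv_Rd :: "(nat \<Rightarrow> ('a::topological_space) measure) \<Rightarrow> 'a measure \<Rightarrow> bool" where
  "weak_conv_Rd M N \<longleftrightarrow> (\<forall>f :: 'a \<Rightarrow> real. continuous_on UNIV f \<and> bounded (range f) \<longrightarrow>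
      (\<lambda>k. integral\<^sup>L (M k) f) \<longlonglongrightarrow> integral\<^sup>L N f)"

definition fourier :: "('a::euclidean_space) measure \<Rightarrow> 'a \<Rightarrow> complex" where
  "fourier \<nu> \<xi> = (LINT x|\<nu>. cis (- 2 * pi * (\<xi> \<bullet> x)))"

definition Zset :: "(real ^ 'n::finite) measure \<Rightarrow> (real ^ 'n) set" where
  "Zset \<nu> = {\<xi>. \<forall>k :: real ^ 'n. (\<forall>i. k $ i \<in> \<int>) \<longrightarrow> fourier \<nu> (\<xi> + k) = 0}"

end

theory Submission
  imports Defs
begin


lemma pair_bound:
  fixes p :: "'a pmf" and q :: "'b pmf"
  assumes "\<And>x y. x \<in> set_pmf p \<Longrightarrow> y \<in> set_pmf q \<Longrightarrow> (x,y) \<in> E \<Longrightarrow> x \<in> A \<and> y \<in> C"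
  shows "measure (pair_pmf p q) E \<le> measure p A * measure q C"
proof -
  have "measure (pair_pmf p q) E = measure (pair_pmf p q) (E \<inter> set_pmf (pair_pmf p q))"
    by (rule measure_Int_set_pmf[symmetric])
  also have "\<dots> \<le> measure (pair_pmf p q) ((A \<inter> set_pmf p) \<times> (C \<inter> set_pmf q))"
    using assms by (intro measure_pmf.finite_measure_mono) auto
  also have "\<dots> = measure p (A \<inter> set_pmf p) * measure q (C \<inter> set_pmf q)"
    by (rule measure_pmf_prob_product) (auto intro: countable_subset)
  also have "\<dots> = measure p A * measure q C" by (simp add: measure_Int_set_pmf)
  finally show ?thesis .
qed

lemma map_pair_bound:
  fixes p :: "'a pmf" and q :: "'b pmf"
  assumes "\<And>x y. x \<in> set_pmf p \<Longrightarrow> y \<in> set_pmf q \<Longrightarrow> f (x,y) \<in> E \<Longrightarrow> x \<in> A \<and> y \<in> C"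
  shows "measure (map_pmf f (pair_pmf p q)) E \<le> measure p A * measure q C"
  using pair_bound[of p q "f -` E" A C] assms by simp

lemma map_pair_bound1:
  fixes p :: "'a pmf" and q :: "'b pmf"
  assumes "\<And>x y. x \<in> set_pmf p \<Longrightarrow> y \<in> set_pmf q \<Longrightarrow> f (x,y) \<in> E \<Longrightarrow> x \<in> A"
  shows "measure (map_pmf f (pair_pmf p q)) E \<le> measure p A"
  using map_pair_bound[of p q f E A UNIV] assms by simp

lemma lin_aux: "(y::real) \<le> 1 - a \<Longrightarrow> s \<le> a - c \<Longrightarrow> 1 - 2*c < y+s \<Longrightarrow> c \<le> a \<Longrightarrow> 1 - 2*a < y \<and> a - 2*c < s"
  by linarith
lemma arith1:
  fixes P M y s :: real
  assumes "P \<ge> 1" "M \<ge> 2" "y \<le> 1 - 1/P" "s \<le> (M-1)/(P*M)" "y + s > 1 - 2/(P*M)"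
  shows "y > 1 - 2/P \<and> s > (M-2)/(P*M)"
proof -
  have e1: "(M-1)/(P*M) = 1/P - 1/(P*M)" using assms(1,2) by (simp add: field_simps)
  have e2: "(M-2)/(P*M) = 1/P - 2*(1/(P*M))" using assms(1,2) by (simp add: field_simps)
  have e3: "2/P = 2 * (1/P)" by simp
  have e4: "1/(P*M) \<le> 1/P" using assms(1,2) by (simp add: field_simps)
  have e5: "2/(P*M) = 2 * (1/(P*M))" by simp
  show ?thesis using lin_aux[of y "1/P" s "1/(P*M)"] assms(3-5) e4 unfolding e1 e2 e3 e5 by blast
qed

lemma arith2: fixes P M t Q :: real assumes "P \<ge> 1" "M \<ge> 2"
  shows "t - (M - 1) / (P * M) - (1 / Q - 1 / P) = t - (1 / Q - 1 / (P * M))"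
proof -
  have e1: "(M-1)/(P*M) = 1/P - 1/(P*M)" using assms(1,2) by (simp add: field_simps)
  show ?thesis unfolding e1 by simp
qed

definition PP :: "(nat \<Rightarrow> 'n::finite \<Rightarrow> nat) \<Rightarrow> nat \<Rightarrow> 'n \<Rightarrow> real" where
  "PP m n i = (\<Prod>j\<in>{1..n}. real (m j i))"

lemma PP_0[simp]: "PP m 0 i = 1" by (simp add: PP_def)
lemma PP_Suc: "PP m (Suc n) i = PP m n i * m (Suc n) i"
  by (simp add: PP_def prod.nat_ivl_Suc' mult.commute)

locale setting =
  fixes m :: "nat \<Rightarrow> 'n::finite \<Rightarrow> nat" and B :: "nat \<Rightarrow> (nat ^ 'n) set"
  assumes D: "\<And>k. k \<ge> 1 \<Longrightarrow> in_D m B k"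
begin

lemma m_ge: "k \<ge> 1 \<Longrightarrow> m k i \<ge> 2" using D by (auto simp: in_D_def)

lemma PP_pos: "PP m n i \<ge> 1"
proof (induction n)
  case (Suc n)
  have "real (m (Suc n) i) \<ge> 1" using m_ge[of "Suc n" i] by simp
  have "PP m n i * 1 \<le> PP m n i * real (m (Suc n) i)" using Suc \<open>real (m (Suc n) i) \<ge> 1\<close> by (intro mult_left_mono) auto
  thus ?case using Suc unfolding PP_Suc by linarith
qed simp

lemma B_finite: "k \<ge> 1 \<Longrightarrow> finite (B k)"
proof -
  assume k: "k \<ge> 1"
  have "B k \<subseteq> vec_lambda ` (PiE UNIV (\<lambda>i. {..<m k i}))"
  proof
    fix b assume "b \<in> B k"
    hence "\<forall>i. b $ i < m k i" using D[OF k] by (auto simp: in_D_def)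
    thus "b \<in> vec_lambda ` (PiE UNIV (\<lambda>i. {..<m k i}))"
      by (intro image_eqI[of _ _ "\<lambda>i. b $ i"]) auto
  qed
  thus ?thesis by (rule finite_subset) (intro finite_imageI finite_PiE; auto)
qed

lemma B_ne: "k \<ge> 1 \<Longrightarrow> B k \<noteq> {}" using D by (auto simp: in_D_def)
lemma B_lt: "k \<ge> 1 \<Longrightarrow> b \<in> B k \<Longrightarrow> b $ i < m k i" using D by (auto simp: in_D_def)

lemma scaled_comp: "scaled_pt m k b $ i = real (b $ i) / PP m k i"
  by (simp add: scaled_pt_def PP_def)

abbreviation "U k \<equiv> pmf_of_set (scaled_pt m k ` B k)"

lemma set_U: "k \<ge> 1 \<Longrightarrow> set_pmf (U k) = scaled_pt m k ` B k"
  using B_finite B_ne by simp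

lemma U_bound: "k \<ge> 1 \<Longrightarrow> s \<in> set_pmf (U k) \<Longrightarrow> 0 \<le> s $ i \<and> s $ i \<le> (real (m k i) - 1) / PP m k i"
proof -
  assume k: "k \<ge> 1" and s: "s \<in> set_pmf (U k)"
  then obtain b where b: "b \<in> B k" "s = scaled_pt m k b" using set_U by auto
  have "b $ i + 1 \<le> m k i" using B_lt[OF k b(1), of i] by simp
  hence "real (b $ i) \<le> real (m k i) - 1" by linarith
  moreover have "PP m k i > 0" using PP_pos[of k i] by simp
  ultimately show ?thesis using b by (simp add: scaled_comp divide_right_mono)
qed

lemma fc_Suc: "fin_conv m B (Suc n) = map_pmf (\<lambda>(x, y). x + y) (pair_pmf (fin_conv m B n) (U (Suc n)))"
  by simp

lemma set_fc: "x \<in> set_pmf (fin_conv m B n) \<Longrightarrow> 0 \<le> x $ i \<and> x $ i \<le> 1 - 1 / PP m n i"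
proof (induction n arbitrary: x)
  case 0 thus ?case by simp
next
  case (Suc n)
  from Suc.prems obtain y s where ys: "y \<in> set_pmf (fin_conv m B n)" "s \<in> set_pmf (U (Suc n))" "x = y + s"
    by (auto simp del: fin_conv.simps simp: fc_Suc)
  have y: "0 \<le> y $ i \<and> y $ i \<le> 1 - 1 / PP m n i" using Suc.IH ys(1) by blast
  have s: "0 \<le> s $ i \<and> s $ i \<le> (real (m (Suc n) i) - 1) / PP m (Suc n) i" using U_bound[of "Suc n" s i] ys(2) by simp
  have P: "PP m n i \<ge> 1" using PP_pos by blast
  have "1 - 1 / PP m n i + (real (m (Suc n) i) - 1) / PP m (Suc n) i = 1 - 1 / PP m (Suc n) i"
    using P m_ge[of "Suc n" i] by (simp add: PP_Suc field_simps)
  thus ?case using y s ys(3) by simp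
qed

definition "q1 i J = measure (fin_conv m B J) {x. x $ i > 1 - 2 / PP m J i}"
definition "q0 i J = measure (fin_conv m B J) {x. x $ i < 1 / PP m J i}"

lemma q_prod: "q1 i J * q0 i J \<le> (1/4) ^ J"
proof (induction J)
  case 0
  show ?case by (simp add: q1_def q0_def)
next
  case (Suc J)
  define P where "P = PP m J i"
  define M where "M = real (m (Suc J) i)"
  have P: "P \<ge> 1" using PP_pos by (simp add: P_def)
  have M: "M \<ge> 2" using m_ge[of "Suc J" i] by (simp add: M_def)
  have P': "PP m (Suc J) i = P * M" by (simp add: P_def M_def PP_Suc)
  define p1 where "p1 = measure (U (Suc J)) {s. s $ i > (M - 2) / (P * M)}"
  define p0 where "p0 = measure (U (Suc J)) {s. s $ i < 1 / (P * M)}"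
  have "q1 i (Suc J) \<le> q1 i J * p1"
    unfolding q1_def p1_def fc_Suc
  proof (rule map_pair_bound, goal_cases)
    case (1 y s)
    have y: "y $ i \<le> 1 - 1 / P" using set_fc[OF 1(1), of i] by (simp add: P_def)
    have s: "s $ i \<le> (M - 1) / (P * M)" using U_bound[of "Suc J" s i] 1(2) by (simp add: P' M_def)
    have x: "y $ i + s $ i > 1 - 2 / (P * M)" using 1(3) by (simp add: P')
    have "y $ i > 1 - 2 / P \<and> s $ i > (M - 2)/(P*M)" by (rule arith1) (use P M x y s in auto)
    thus ?case by (simp add: P_def)
  qed
  moreover have "q0 i (Suc J) \<le> q0 i J * p0"
    unfolding q0_def p0_def fc_Suc
  proof (rule map_pair_bound, goal_cases)
    case (1 y s)
    have y: "y $ i \<ge> 0" using set_fc[OF 1(1), of i] by simp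
    have s: "s $ i \<ge> 0" using U_bound[of "Suc J" s i] 1(2) by simp
    have x: "y $ i + s $ i < 1 / (P * M)" using 1(3) by (simp add: P')
    have "1 / (P * M) \<le> 1 / P" using P M by (simp add: field_simps)
    thus ?case using x y s by (simp add: P_def)
  qed
  moreover have "p0 + p1 \<le> 1"
  proof -
    have disj: "{s. s $ i < 1 / (P * M)} \<inter> {s. s $ i > (M - 2) / (P * M)} \<inter> set_pmf (U (Suc J)) = {}"
    proof (safe, goal_cases)
      case (1 s)
      then obtain b where b: "b \<in> B (Suc J)" "s = scaled_pt m (Suc J) b" using set_U by auto
      have PM: "P * M > 0" using P M by simp
      have sb: "s $ i = real (b $ i) / (P * M)" using b by (simp add: scaled_comp P')
      have h1: "s $ i < 1 / (P * M)" "(M - 2) / (P * M) < s $ i" using 1 by auto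
      have "real (b $ i) / (P * M) < 1 / (P * M)" using h1(1) unfolding sb .
      hence lt: "real (b $ i) < 1" using PM unfolding divide_less_cancel by auto
      have "(M - 2) / (P * M) < real (b $ i) / (P * M)" using h1(2) unfolding sb .
      hence gt: "real (b $ i) > M - 2" using PM unfolding divide_less_cancel by auto
      from lt have "b $ i = 0" by simp
      with gt M show ?case by simp
    qed
    have "p0 + p1 = measure (U (Suc J)) ({s. s $ i < 1 / (P * M)} \<inter> set_pmf (U (Suc J))) +
        measure (U (Suc J)) ({s. s $ i > (M - 2) / (P * M)} \<inter> set_pmf (U (Suc J)))"
      by (simp add: p0_def p1_def measure_Int_set_pmf)
    also have "\<dots> = measure (U (Suc J)) (({s. s $ i < 1 / (P * M)} \<inter> set_pmf (U (Suc J))) \<union>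
        ({s. s $ i > (M - 2) / (P * M)} \<inter> set_pmf (U (Suc J))))"
      using disj by (intro measure_pmf.finite_measure_Union[symmetric]) auto
    also have "\<dots> \<le> 1" by simp
    finally show ?thesis .
  qed
  moreover have "p0 \<ge> 0" "p1 \<ge> 0" "q1 i J \<ge> 0" "q0 i J \<ge> 0" by (simp_all add: p0_def p1_def q1_def q0_def)
  ultimately have "q1 i (Suc J) * q0 i (Suc J) \<le> (q1 i J * p1) * (q0 i J * p0)"
    by (intro mult_mono) (simp_all add: q1_def q0_def)
  also have "\<dots> = (q1 i J * q0 i J) * (p0 * p1)" by (simp add: algebra_simps)
  also have "\<dots> \<le> (1/4)^J * (1/4)"
  proof (rule mult_mono)
    have "0 \<le> (p0 - p1)^2" by simp
    moreover have "(p0+p1)^2 = (p0-p1)^2 + 4*(p0*p1)" by (simp add: power2_eq_square algebra_simps)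
    moreover have "(p0+p1)^2 \<le> 1^2" using \<open>p0 + p1 \<le> 1\<close> \<open>p0 \<ge> 0\<close> \<open>p1 \<ge> 0\<close>
      by (intro power_mono) auto
    ultimately show "p0 * p1 \<le> 1/4" unfolding power_one by linarith
  qed (use Suc.IH \<open>p0 \<ge> 0\<close> \<open>p1 \<ge> 0\<close> in auto)
  finally show ?case by simp
qed

lemma tail_ge: "measure (fin_conv m B (J + k)) {x. x $ i \<ge> t} \<le>
   measure (fin_conv m B J) {x. x $ i \<ge> t - (1 / PP m J i - 1 / PP m (J + k) i)}"
proof (induction k arbitrary: t)
  case 0 thus ?case by simp
next
  case (Suc k)
  define P where "P = PP m (J + k) i"
  define M where "M = real (m (Suc (J + k)) i)"
  have P: "P \<ge> 1" using PP_pos by (simp add: P_def)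
  have M: "M \<ge> 2" using m_ge[of "Suc (J+k)" i] by (simp add: M_def)
  have P': "PP m (Suc (J + k)) i = P * M" by (simp add: P_def M_def PP_Suc)
  have "measure (fin_conv m B (J + Suc k)) {x. x $ i \<ge> t} \<le>
     measure (fin_conv m B (J + k)) {x. x $ i \<ge> t - (M - 1) / (P * M)}"
    unfolding add_Suc_right fc_Suc
  proof (rule map_pair_bound1, goal_cases)
    case (1 y s)
    have s: "s $ i \<le> (M - 1) / (P * M)" using U_bound[of "Suc (J+k)" s i] 1(2) by (simp add: P' M_def)
    thus ?case using 1(3) by simp
  qed
  also have "\<dots> \<le> measure (fin_conv m B J) {x. x $ i \<ge> t - (M - 1) / (P * M) - (1 / PP m J i - 1 / P)}"
    using Suc.IH[of "t - (M - 1) / (P * M)"] by (simp add: P_def)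
  also have "t - (M - 1) / (P * M) - (1 / PP m J i - 1 / P) = t - (1 / PP m J i - 1 / PP m (J + Suc k) i)"
    using arith2[OF P M] by (simp add: PP_Suc P_def M_def)
  finally show ?case by simp
qed

lemma tail_lt: "measure (fin_conv m B (J + k)) {x. x $ i < t} \<le> measure (fin_conv m B J) {x. x $ i < t}"
proof (induction k)
  case 0 thus ?case by simp
next
  case (Suc k)
  have "measure (fin_conv m B (J + Suc k)) {x. x $ i < t} \<le> measure (fin_conv m B (J + k)) {x. x $ i < t}"
    unfolding add_Suc_right fc_Suc
  proof (rule map_pair_bound1, goal_cases)
    case (1 y s)
    have s: "s $ i \<ge> 0" using U_bound[of "Suc (J+k)" s i] 1(2) by simp
    thus ?case using 1(3) by simp
  qed
  thus ?case using Suc.IH by simp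
qed

end


lemma pmf_int_le:
  fixes p :: "'a pmf" and \<phi> :: "'a \<Rightarrow> real"
  assumes "\<And>x. 0 \<le> \<phi> x \<and> \<phi> x \<le> 1" "\<And>x. \<phi> x > 0 \<Longrightarrow> x \<in> A"
  shows "integral\<^sup>L p \<phi> \<le> measure p A"
proof -
  have "integral\<^sup>L p \<phi> \<le> integral\<^sup>L p (indicator A :: 'a \<Rightarrow> real)"
  proof (intro integral_mono measure_pmf.integrable_const_bound[where B=1])
    fix x show "\<phi> x \<le> indicator A x" using assms[of x] by (cases "\<phi> x > 0") (auto simp: indicator_def)
  qed (use assms in \<open>auto simp: indicator_def\<close>)
  thus ?thesis by simp
qed

lemma bounded01: "(\<And>x. 0 \<le> \<phi> x \<and> \<phi> x \<le> (1::real)) \<Longrightarrow> bounded (range \<phi>)"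
  by (rule bounded_subset[of "{0..1}"]) (auto intro: compact_imp_bounded)

locale lim_setting = setting m B for m :: "nat \<Rightarrow> 'n::finite \<Rightarrow> nat" and B +
  fixes \<nu> :: "(real ^ 'n) measure"
  assumes nu_borel: "sets \<nu> = sets borel" and nu_prob: "prob_space \<nu>"
    and nu_lim: "weak_conv_Rd (\<lambda>k. measure_pmf (fin_conv m B k)) \<nu>"
begin

lemma space_nu: "space \<nu> = UNIV" using sets_eq_imp_space_eq[OF nu_borel] by simp

lemma meas_nu: "continuous_on UNIV f \<Longrightarrow> f \<in> borel_measurable \<nu>"
  using borel_measurable_continuous_onI measurable_cong_sets[OF nu_borel refl] by blast

lemma int_nu: "continuous_on UNIV (f :: _ \<Rightarrow> 'b::{banach,second_countable_topology}) \<Longrightarrow> (\<And>x. norm (f x) \<le> C) \<Longrightarrow> integrable \<nu> f"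
proof -
  assume c: "continuous_on UNIV f" and b: "\<And>x. norm (f x) \<le> C"
  interpret prob_space \<nu> by (rule nu_prob)
  show ?thesis by (rule integrable_const_bound[where B=C]) (use b meas_nu[OF c] in auto)
qed

lemma lim_int: fixes \<phi> :: "real ^ 'n \<Rightarrow> real" shows "continuous_on UNIV \<phi> \<Longrightarrow> (\<And>x. 0 \<le> \<phi> x \<and> \<phi> x \<le> 1) \<Longrightarrow>
   (\<lambda>k. integral\<^sup>L (measure_pmf (fin_conv m B k)) \<phi>) \<longlonglongrightarrow> integral\<^sup>L \<nu> \<phi>"
  using nu_lim bounded01[of \<phi>] unfolding weak_conv_Rd_def by blast

lemma weak_le:
  fixes \<phi> :: "real ^ 'n \<Rightarrow> real"
  assumes "continuous_on UNIV \<phi>" "\<And>x. 0 \<le> \<phi> x \<and> \<phi> x \<le> 1"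
    "\<And>n. n \<ge> J \<Longrightarrow> integral\<^sup>L (measure_pmf (fin_conv m B n)) \<phi> \<le> c"
  shows "integral\<^sup>L \<nu> \<phi> \<le> c"
  by (rule LIMSEQ_le_const2[OF lim_int[OF assms(1,2)]]) (use assms(3) in blast)

lemma nu_le_int:
  fixes \<phi> :: "real ^ 'n \<Rightarrow> real"
  assumes "continuous_on UNIV \<phi>" "\<And>x. 0 \<le> \<phi> x \<and> \<phi> x \<le> 1" "\<And>x. x \<in> A \<Longrightarrow> \<phi> x \<ge> 1" "A \<in> sets borel"
  shows "measure \<nu> A \<le> integral\<^sup>L \<nu> \<phi>"
proof -
  interpret prob_space \<nu> by (rule nu_prob)
  have "measure \<nu> A = integral\<^sup>L \<nu> (indicator A :: _ \<Rightarrow> real)" by (simp add: space_nu)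
  also have "\<dots> \<le> integral\<^sup>L \<nu> \<phi>"
  proof (rule integral_mono)
    show "integrable \<nu> (indicator A :: _ \<Rightarrow> real)"
      by (rule integrable_const_bound[where B=1]) (use assms(4) nu_borel in auto)
    show "integrable \<nu> \<phi>" by (rule int_nu[OF assms(1), of 1]) (use assms(2) in auto)
    fix x show "indicator A x \<le> \<phi> x" using assms(2,3)[of x] by (auto simp: indicator_def)
  qed
  finally show ?thesis .
qed

lemma closed_ge: "closed {x :: real ^ 'n. c \<le> x $ i}"
  by (intro closed_Collect_le continuous_intros)
lemma closed_le: "closed {x :: real ^ 'n. x $ i \<le> c}"
  by (intro closed_Collect_le continuous_intros)

lemma nu_ge1: "measure \<nu> {x. x $ i \<ge> 1} \<le> q1 i J"
proof -
  define P where "P = PP m J i"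
  have P: "P \<ge> 1" using PP_pos by (simp add: P_def)
  define \<phi> where "\<phi> = (\<lambda>x :: real ^ 'n. max 0 (min 1 ((x $ i - (1 - 1 / P)) * P)))"
  have c: "continuous_on UNIV \<phi>" unfolding \<phi>_def by (intro continuous_intros)
  have b: "\<And>x. 0 \<le> \<phi> x \<and> \<phi> x \<le> 1" by (simp add: \<phi>_def)
  have "measure \<nu> {x. x $ i \<ge> 1} \<le> integral\<^sup>L \<nu> \<phi>"
  proof (rule nu_le_int[OF c b])
    fix x :: "real ^ 'n" assume "x \<in> {x. x $ i \<ge> 1}"
    hence "(x $ i - (1 - 1 / P)) * P \<ge> 1" using P by (simp add: algebra_simps)
    thus "\<phi> x \<ge> 1" by (simp add: \<phi>_def)
  qed (use closed_ge in auto)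
  also have "\<dots> \<le> q1 i J"
  proof (rule weak_le[OF c b])
    fix n assume n: "n \<ge> J"
    have "integral\<^sup>L (measure_pmf (fin_conv m B n)) \<phi> \<le> measure (fin_conv m B n) {x. x $ i \<ge> 1 - 1 / P}"
    proof (rule pmf_int_le[OF b])
      fix x assume "\<phi> x > 0"
      hence "(x $ i - (1 - 1 / P)) * P > 0" by (simp add: \<phi>_def)
      thus "x \<in> {x. x $ i \<ge> 1 - 1 / P}" using P by (simp add: zero_less_mult_iff)
    qed
    also have "\<dots> \<le> measure (fin_conv m B J) {x. x $ i \<ge> 1 - 1 / P - (1 / PP m J i - 1 / PP m (J + (n - J)) i)}"
      using tail_ge[where J=J and k="n - J" and i=i and t="1 - 1 / P"] n by simp
    also have "\<dots> \<le> q1 i J" unfolding q1_def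
    proof (rule measure_pmf.finite_measure_mono)
      have "PP m (J + (n - J)) i \<ge> 1" by (rule PP_pos)
      hence "1 / PP m (J + (n - J)) i > 0" by simp
      have two: "2 / PP m J i = 2 * (1 / PP m J i)" by simp
      show "{x. x $ i \<ge> 1 - 1 / P - (1 / PP m J i - 1 / PP m (J + (n - J)) i)} \<subseteq> {x. x $ i > 1 - 2 / PP m J i}"
      proof
        fix x assume "x \<in> {x. x $ i \<ge> 1 - 1 / P - (1 / PP m J i - 1 / PP m (J + (n - J)) i)}"
        hence "x $ i \<ge> 1 - 1 / PP m J i - (1 / PP m J i - 1 / PP m (J + (n - J)) i)" by (simp add: P_def)
        hence "x $ i > 1 - 2 / PP m J i" unfolding two using \<open>1 / PP m (J + (n - J)) i > 0\<close> by linarith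
        thus "x \<in> {x. x $ i > 1 - 2 / PP m J i}" by simp
      qed
    qed simp
    finally show "integral\<^sup>L (measure_pmf (fin_conv m B n)) \<phi> \<le> q1 i J" .
  qed
  finally show ?thesis .
qed

lemma nu_le0: "measure \<nu> {x. x $ i \<le> 0} \<le> q0 i J"
proof -
  define P where "P = PP m J i"
  have P: "P \<ge> 1" using PP_pos by (simp add: P_def)
  define \<phi> where "\<phi> = (\<lambda>x :: real ^ 'n. max 0 (min 1 (1 - x $ i * P)))"
  have c: "continuous_on UNIV \<phi>" unfolding \<phi>_def by (intro continuous_intros)
  have b: "\<And>x. 0 \<le> \<phi> x \<and> \<phi> x \<le> 1" by (simp add: \<phi>_def)
  have "measure \<nu> {x. x $ i \<le> 0} \<le> integral\<^sup>L \<nu> \<phi>"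
  proof (rule nu_le_int[OF c b])
    fix x :: "real ^ 'n" assume "x \<in> {x. x $ i \<le> 0}"
    hence "x $ i * P \<le> 0" using P by (simp add: mult_nonpos_nonneg)
    thus "\<phi> x \<ge> 1" by (simp add: \<phi>_def)
  qed (use closed_le in auto)
  also have "\<dots> \<le> q0 i J"
  proof (rule weak_le[OF c b])
    fix n assume n: "n \<ge> J"
    have "integral\<^sup>L (measure_pmf (fin_conv m B n)) \<phi> \<le> measure (fin_conv m B n) {x. x $ i < 1 / P}"
    proof (rule pmf_int_le[OF b])
      fix x assume "\<phi> x > 0"
      hence "x $ i * P < 1" by (simp add: \<phi>_def)
      thus "x \<in> {x. x $ i < 1 / P}" using P by (simp add: field_simps)
    qed
    also have "\<dots> \<le> q0 i J"
      using tail_lt[where J=J and k="n - J" and i=i and t="1 / P"] n by (simp add: q0_def P_def)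
    finally show "integral\<^sup>L (measure_pmf (fin_conv m B n)) \<phi> \<le> q0 i J" .
  qed
  finally show ?thesis .
qed

lemma AE_zero_int:
  fixes \<phi> :: "real ^ 'n \<Rightarrow> real"
  assumes "continuous_on UNIV \<phi>" "\<And>x. 0 \<le> \<phi> x \<and> \<phi> x \<le> 1"
    "\<And>n x. x \<in> set_pmf (fin_conv m B n) \<Longrightarrow> \<phi> x = 0"
  shows "AE x in \<nu>. \<phi> x = 0"
proof -
  have "(\<lambda>k. integral\<^sup>L (measure_pmf (fin_conv m B k)) \<phi>) = (\<lambda>k. 0)"
  proof
    fix k
    have "AE x in measure_pmf (fin_conv m B k). \<phi> x = 0" using assms(3) by (simp add: AE_measure_pmf_iff)
    hence "integral\<^sup>L (measure_pmf (fin_conv m B k)) \<phi> = integral\<^sup>L (measure_pmf (fin_conv m B k)) (\<lambda>x. 0)"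
      by (intro integral_cong_AE) auto
    thus "integral\<^sup>L (measure_pmf (fin_conv m B k)) \<phi> = 0" by simp
  qed
  hence "integral\<^sup>L \<nu> \<phi> = 0" using lim_int[OF assms(1,2)] LIMSEQ_unique[OF tendsto_const] by metis
  moreover have "integrable \<nu> \<phi>" by (rule int_nu[OF assms(1), of 1]) (use assms(2) in auto)
  ultimately show ?thesis using integral_nonneg_eq_0_iff_AE[of \<nu> \<phi>] assms(2) by auto
qed

lemma AE_cube: "AE x in \<nu>. 0 \<le> x $ i \<and> x $ i \<le> 1"
proof -
  have "AE x in \<nu>. max 0 (min 1 (x $ i - 1)) = (0::real)"
  proof (rule AE_zero_int)
    fix n x assume "x \<in> set_pmf (fin_conv m B n)"
    have "1 / PP m n i > 0" using PP_pos[of n i] by simp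
    with set_fc[OF \<open>x \<in> set_pmf (fin_conv m B n)\<close>, of i] have "x $ i \<le> 1" by linarith
    thus "max 0 (min 1 (x $ i - 1)) = (0::real)" by simp
  qed (auto intro!: continuous_intros)
  moreover have "AE x in \<nu>. max 0 (min 1 (- x $ i)) = (0::real)"
  proof (rule AE_zero_int)
    fix n x assume "x \<in> set_pmf (fin_conv m B n)"
    from set_fc[OF this, of i] show "max 0 (min 1 (- x $ i)) = (0::real)" by simp
  qed (auto intro!: continuous_intros)
  ultimately show ?thesis by eventually_elim (auto simp: max_def min_def split: if_splits)
qed

lemma null_AE: "A \<in> sets borel \<Longrightarrow> measure \<nu> A = 0 \<Longrightarrow> AE x in \<nu>. x \<notin> A"
proof -
  assume A: "A \<in> sets borel" "measure \<nu> A = 0"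
  interpret prob_space \<nu> by (rule nu_prob)
  have "A \<in> null_sets \<nu>" using A nu_borel by (intro null_setsI) (simp_all add: emeasure_eq_measure)
  thus ?thesis by (rule AE_I') (auto)
qed

lemma endpoint: "(AE x in \<nu>. x $ i < 1) \<or> (AE x in \<nu>. x $ i > 0)"
proof -
  define a where "a = measure \<nu> {x. x $ i \<ge> 1}"
  define b where "b = measure \<nu> {x. x $ i \<le> 0}"
  have a0: "a \<ge> 0" and b0: "b \<ge> 0" by (simp_all add: a_def b_def)
  have "\<And>J. a * b \<le> (1/4) ^ J"
  proof -
    fix J
    have "a * b \<le> q1 i J * q0 i J"
      using nu_ge1[of i J] nu_le0[of i J] a0 b0 by (intro mult_mono) (simp_all add: a_def b_def q1_def)
    also have "\<dots> \<le> (1/4)^J" by (rule q_prod)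
    finally show "a * b \<le> (1/4) ^ J" .
  qed
  hence "a * b \<le> 0"
    by (intro LIMSEQ_le_const[OF LIMSEQ_power_zero[of "1/4::real"]]) auto
  hence "a = 0 \<or> b = 0" using a0 b0 by (metis mult_pos_pos order.not_eq_order_implies_strict not_le)
  thus ?thesis
  proof
    assume "a = 0"
    hence "AE x in \<nu>. x \<notin> {x. x $ i \<ge> 1}" using null_AE[of "{x. x $ i \<ge> 1}"] closed_ge by (simp add: a_def)
    hence "AE x in \<nu>. x $ i < 1" by eventually_elim auto
    thus ?thesis by blast
  next
    assume "b = 0"
    hence "AE x in \<nu>. x \<notin> {x. x $ i \<le> 0}" using null_AE[of "{x. x $ i \<le> 0}"] closed_le by (simp add: b_def)
    hence "AE x in \<nu>. x $ i > 0" by eventually_elim auto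
    thus ?thesis by blast
  qed
qed

end


lemma cis_comb:
  fixes a b t :: real
  shows "((complex_of_real a - \<i> * complex_of_real b) / 2) * cis t + ((complex_of_real a + \<i> * complex_of_real b) / 2) * cis (- t)
     = complex_of_real (cos t * a + sin t * b)"
proof -
  have c1: "cis t = complex_of_real (cos t) + \<i> * complex_of_real (sin t)" by (simp add: complex_eq_iff)
  have c2: "cis (-t) = complex_of_real (cos t) - \<i> * complex_of_real (sin t)" by (simp add: complex_eq_iff)
  show ?thesis unfolding c1 c2 by (simp add: complex_eq_iff add_divide_distrib[symmetric])
qed

inductive tp :: "(real ^ 'n::finite \<Rightarrow> complex) \<Rightarrow> bool" where
  exp: "(\<And>i. k $ i \<in> \<int>) \<Longrightarrow> tp (\<lambda>x. cis (2 * pi * (k \<bullet> x)))"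
| add: "tp f \<Longrightarrow> tp g \<Longrightarrow> tp (\<lambda>x. f x + g x)"
| smul: "tp f \<Longrightarrow> tp (\<lambda>x. c * f x)"

lemma tp_const: "tp (\<lambda>x. c)"
proof -
  have "tp (\<lambda>x :: real ^ 'n. c * cis (2 * pi * (0 \<bullet> x)))" by (intro tp.smul tp.exp) auto
  thus ?thesis by simp
qed

lemma tp_mult_exp: "tp g \<Longrightarrow> (\<And>i. k $ i \<in> \<int>) \<Longrightarrow> tp (\<lambda>x. cis (2 * pi * (k \<bullet> x)) * g x)"
proof (induction g rule: tp.induct)
  case (exp k')
  have "tp (\<lambda>x. cis (2 * pi * ((k + k') \<bullet> x)))" using exp by (intro tp.exp) (auto intro: Ints_add)
  thus ?case by (simp add: cis_mult inner_add_left distrib_left)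
next
  case (add f g)
  hence "tp (\<lambda>x. cis (2 * pi * (k \<bullet> x)) * f x + cis (2 * pi * (k \<bullet> x)) * g x)" by (intro tp.add) auto
  thus ?case by (simp add: distrib_left)
next
  case (smul f c)
  hence "tp (\<lambda>x. c * (cis (2 * pi * (k \<bullet> x)) * f x))" by (intro tp.smul) auto
  thus ?case by (simp add: algebra_simps)
qed

lemma tp_mult: "tp f \<Longrightarrow> tp g \<Longrightarrow> tp (\<lambda>x. f x * g x)"
proof (induction f rule: tp.induct)
  case (exp k) thus ?case by (intro tp_mult_exp) auto
next
  case (add f1 f2)
  hence "tp (\<lambda>x. f1 x * g x + f2 x * g x)" by (intro tp.add) auto
  thus ?case by (simp add: distrib_right)
next
  case (smul f c)
  hence "tp (\<lambda>x. c * (f x * g x))" by (intro tp.smul) auto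
  thus ?case by (simp add: algebra_simps)
qed

lemma tp_prod: "finite I \<Longrightarrow> (\<And>i. i \<in> I \<Longrightarrow> tp (f i)) \<Longrightarrow> tp (\<lambda>x. \<Prod>i\<in>I. f i x)"
proof (induction I rule: finite_induct)
  case empty thus ?case using tp_const[of 1] by simp
next
  case (insert a I)
  hence "tp (\<lambda>x. f a x * (\<Prod>i\<in>I. f i x))" by (intro tp_mult) auto
  thus ?case using insert by simp
qed

lemma tp_bnd: "tp f \<Longrightarrow> continuous_on UNIV f \<and> (\<exists>C. \<forall>x. norm (f x) \<le> C)"
proof (induction f rule: tp.induct)
  case (exp k)
  show ?case by (auto intro!: continuous_intros)
next
  case (add f g)
  then obtain C1 C2 where "\<forall>x. norm (f x) \<le> C1" "\<forall>x. norm (g x) \<le> C2" by blast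
  hence "\<forall>x. norm (f x + g x) \<le> C1 + C2" by (metis add_mono norm_triangle_le)
  thus ?case using add by (auto intro!: continuous_intros)
next
  case (smul f c)
  then obtain C where C: "\<forall>x. norm (f x) \<le> C" by blast
  hence "\<forall>x. norm (c * f x) \<le> norm c * C" by (simp add: norm_mult mult_left_mono)
  thus ?case using smul by (auto intro!: continuous_intros)
qed

lemma tp_axis: "tp (\<lambda>x :: real ^ 'n::finite. cis (2 * pi * (x $ i)))" "tp (\<lambda>x :: real ^ 'n::finite. cis (- (2 * pi * (x $ i))))"
proof -
  have "tp (\<lambda>x :: real ^ 'n. cis (2 * pi * (axis i 1 \<bullet> x)))" by (intro tp.exp) (auto simp: axis_def)
  thus "tp (\<lambda>x :: real ^ 'n::finite. cis (2 * pi * (x $ i)))" by (simp add: inner_axis')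
  have "tp (\<lambda>x :: real ^ 'n. cis (2 * pi * ((- axis i 1) \<bullet> x)))" by (intro tp.exp) (auto simp: axis_def)
  thus "tp (\<lambda>x :: real ^ 'n::finite. cis (- (2 * pi * (x $ i))))" by (simp add: inner_axis')
qed

lemma rpf_tp: "real_polynomial_function q \<Longrightarrow> tp (\<lambda>x :: real ^ 'n::finite. complex_of_real (q (cis (2 * pi * (x $ i)))))"
proof (induction q rule: real_polynomial_function.induct)
  case (linear q)
  interpret bounded_linear q by fact
  define A where "A = (complex_of_real (q 1) - \<i> * complex_of_real (q \<i>)) / 2"
  define B where "B = (complex_of_real (q 1) + \<i> * complex_of_real (q \<i>)) / 2"
  have qz: "q z = Re z * q 1 + Im z * q \<i>" for z
  proof -
    have "z = Re z *\<^sub>R 1 + Im z *\<^sub>R \<i>" by (simp add: complex_eq_iff)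
    hence "q z = q (Re z *\<^sub>R 1 + Im z *\<^sub>R \<i>)" by simp
    also have "\<dots> = Re z * q 1 + Im z * q \<i>" by (simp add: add scale)
    finally show ?thesis .
  qed
  have eq: "complex_of_real (q (cis t)) = A * cis t + B * cis (- t)" for t
  proof -
    have "complex_of_real (q (cis t)) = complex_of_real (cos t * q 1 + sin t * q \<i>)" using qz[of "cis t"] by simp
    also have "\<dots> = A * cis t + B * cis (- t)" unfolding A_def B_def by (rule cis_comb[symmetric])
    finally show ?thesis .
  qed
  have "tp (\<lambda>x :: real ^ 'n. A * cis (2 * pi * (x $ i)) + B * cis (- (2 * pi * (x $ i))))"
    by (intro tp.add tp.smul tp_axis)
  thus ?case by (simp add: eq)
next
  case (const c) show ?case by (rule tp_const)
next
  case (add f g) thus ?case by (simp add: tp.add)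
next
  case (mult f g) thus ?case by (simp add: tp_mult)
qed

lemma poly_tp: "polynomial_function (p :: complex \<Rightarrow> complex) \<Longrightarrow> tp (\<lambda>x :: real ^ 'n::finite. p (cis (2 * pi * (x $ i))))"
proof -
  assume p: "polynomial_function p"
  have "real_polynomial_function (Re \<circ> p)" "real_polynomial_function (Im \<circ> p)"
    using p bounded_linear_Re bounded_linear_Im unfolding polynomial_function_def by blast+
  hence "tp (\<lambda>x :: real ^ 'n. complex_of_real ((Re \<circ> p) (cis (2 * pi * (x $ i)))) + \<i> * complex_of_real ((Im \<circ> p) (cis (2 * pi * (x $ i)))))"
    by (intro tp.add tp.smul rpf_tp)
  moreover have "\<And>z. complex_of_real (Re z) + \<i> * complex_of_real (Im z) = z" by (simp add: complex_eq_iff)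
  ultimately show ?thesis by simp
qed

context lim_setting
begin

lemma tp_int:
  assumes Z: "\<And>k :: real ^ 'n. (\<forall>i. k $ i \<in> \<int>) \<Longrightarrow> fourier \<nu> (\<xi> + k) = 0"
  shows "tp f \<Longrightarrow> integral\<^sup>L \<nu> (\<lambda>x. cis (- 2 * pi * (\<xi> \<bullet> x)) * f x) = 0"
proof (induction f rule: tp.induct)
  case (exp k)
  have "integral\<^sup>L \<nu> (\<lambda>x. cis (- 2 * pi * (\<xi> \<bullet> x)) * cis (2 * pi * (k \<bullet> x))) =
        fourier \<nu> (\<xi> + (- k))"
    unfolding fourier_def
  proof (intro Bochner_Integration.integral_cong refl)
    fix x
    have arg: "- 2 * pi * (\<xi> \<bullet> x) + 2 * pi * (k \<bullet> x) = - 2 * pi * ((\<xi> + - k) \<bullet> x)"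
      by (simp add: inner_add_left algebra_simps)
    show "cis (- 2 * pi * (\<xi> \<bullet> x)) * cis (2 * pi * (k \<bullet> x)) = cis (- 2 * pi * ((\<xi> + - k) \<bullet> x))"
      by (simp only: cis_mult arg)
  qed
  also have "\<dots> = 0" using exp by (intro Z) auto
  finally show ?case .
next
  case (add f g)
  have int: "integrable \<nu> (\<lambda>x. cis (- 2 * pi * (\<xi> \<bullet> x)) * h x)" if th: "tp h" for h
  proof -
    obtain C where C: "\<forall>x. norm (h x) \<le> C" and c: "continuous_on UNIV h" using tp_bnd[OF th] by blast
    show ?thesis by (rule int_nu[where C=C]) (use C c in \<open>auto intro!: continuous_intros simp: norm_mult\<close>)
  qed
  have "integral\<^sup>L \<nu> (\<lambda>x. cis (- 2 * pi * (\<xi> \<bullet> x)) * (f x + g x)) =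
     integral\<^sup>L \<nu> (\<lambda>x. cis (- 2 * pi * (\<xi> \<bullet> x)) * f x + cis (- 2 * pi * (\<xi> \<bullet> x)) * g x)"
    by (simp add: distrib_left)
  also have "\<dots> = 0" using add int by (simp add: Bochner_Integration.integral_add)
  finally show ?case .
next
  case (smul f c)
  have "integral\<^sup>L \<nu> (\<lambda>x. cis (- 2 * pi * (\<xi> \<bullet> x)) * (c * f x)) =
     integral\<^sup>L \<nu> (\<lambda>x. c * (cis (- 2 * pi * (\<xi> \<bullet> x)) * f x))"
    by (simp add: algebra_simps)
  also have "\<dots> = 0" using smul by simp
  finally show ?case .
qed

end


definition Fa :: "real \<Rightarrow> complex \<Rightarrow> complex" where
  "Fa a z = cis (pi * a) * exp (complex_of_real a * Ln (- z))"

definition phie :: "real \<Rightarrow> complex \<Rightarrow> real" where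
  "phie e z = min 1 (norm (z - 1) / e)"

definition fe :: "real \<Rightarrow> complex \<Rightarrow> real \<Rightarrow> complex \<Rightarrow> complex" where
  "fe a v e z = complex_of_real (phie e z) * Fa a z + (1 - complex_of_real (phie e z)) * v"

lemma Fa_norm: "norm z = 1 \<Longrightarrow> norm (Fa a z) = 1"
proof -
  assume z: "norm z = 1"
  hence "- z \<noteq> 0" by auto
  hence "Re (complex_of_real a * Ln (- z)) = 0" using z by simp
  thus ?thesis by (simp add: Fa_def norm_mult)
qed

lemma Fa_cis: assumes "0 < t" "t < 1" shows "Fa a (cis (2 * pi * t)) = cis (2 * pi * a * t)"
proof -
  have "exp (\<i> * complex_of_real (2 * pi * t - pi)) = cis (2 * pi * t - pi)" by (rule cis_conv_exp[symmetric])
  also have "cis (2 * pi * t - pi) = - cis (2 * pi * t)" by (simp add: complex_eq_iff)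
  finally have "- cis (2 * pi * t) = exp (\<i> * complex_of_real (2 * pi * t - pi))" by simp
  moreover have "Ln (exp (\<i> * complex_of_real (2 * pi * t - pi))) = \<i> * complex_of_real (2 * pi * t - pi)"
    using assms by (intro Ln_exp) auto
  ultimately have L: "Ln (- cis (2 * pi * t)) = \<i> * complex_of_real (2 * pi * t - pi)" by simp
  have e: "complex_of_real a * (\<i> * complex_of_real (2 * pi * t - pi)) = \<i> * complex_of_real (a * (2 * pi * t - pi))"
    by simp
  have "Fa a (cis (2 * pi * t)) = cis (pi * a) * exp (\<i> * complex_of_real (a * (2 * pi * t - pi)))"
    by (simp only: Fa_def L e)
  also have "\<dots> = cis (pi * a) * cis (a * (2 * pi * t - pi))" by (simp only: cis_conv_exp)
  also have "\<dots> = cis (2 * pi * a * t)" by (simp add: cis_mult algebra_simps)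
  finally show ?thesis .
qed

lemma not_nonpos: "norm (z::complex) = 1 \<Longrightarrow> z \<noteq> 1 \<Longrightarrow> - z \<notin> \<real>\<^sub>\<le>\<^sub>0"
proof
  assume z: "norm z = 1" "z \<noteq> 1" and "- z \<in> \<real>\<^sub>\<le>\<^sub>0"
  hence im: "Im z = 0" and re: "Re z \<ge> 0" by (auto simp: complex_nonpos_Reals_iff)
  have "norm z = \<bar>Re z\<bar>" using im by (simp add: cmod_def)
  hence "Re z = 1" using z re by simp
  hence "z = 1" using im by (simp add: complex_eq_iff)
  thus False using z by simp
qed

lemma Fa_cont: "norm z = 1 \<Longrightarrow> z \<noteq> 1 \<Longrightarrow> isCont (Fa a) z"
  unfolding Fa_def using not_nonpos by (intro continuous_intros) auto

lemma phie_01: "0 \<le> phie e z \<and> phie e z \<le> 1" if "e > 0"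
  using that by (simp add: phie_def)

lemma fe_norm: assumes "e > 0" "norm z = 1" "norm v \<le> 1" shows "norm (fe a v e z) \<le> 1"
proof -
  have p: "0 \<le> phie e z" "phie e z \<le> 1" using phie_01[OF assms(1)] by auto
  have "norm (fe a v e z) \<le> norm (complex_of_real (phie e z) * Fa a z) + norm ((1 - complex_of_real (phie e z)) * v)"
    unfolding fe_def by (rule norm_triangle_ineq)
  also have "norm (complex_of_real (phie e z) * Fa a z) = phie e z"
    using p Fa_norm[OF assms(2)] by (simp add: norm_mult)
  also have "norm ((1 - complex_of_real (phie e z)) * v) = (1 - phie e z) * norm v"
  proof -
    have "1 - complex_of_real (phie e z) = complex_of_real (1 - phie e z)" by simp
    thus ?thesis using p by (simp only: norm_mult norm_of_real)
  qed
  also have "phie e z + (1 - phie e z) * norm v \<le> phie e z + (1 - phie e z) * 1"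
    using p assms(3) by (intro add_left_mono mult_left_mono) auto
  finally show ?thesis by simp
qed

lemma fe_1: "fe a v e 1 = v" by (simp add: fe_def phie_def)

lemma fe_far: "e > 0 \<Longrightarrow> e \<le> norm (z - 1) \<Longrightarrow> fe a v e z = Fa a z"
  by (simp add: fe_def phie_def)

lemma fe_cont: assumes e: "e > 0" and v: "norm v \<le> 1" shows "continuous_on (sphere 0 1) (fe a v e)"
  unfolding continuous_on_eq_continuous_within
proof
  fix z :: complex assume "z \<in> sphere 0 1"
  hence z: "norm z = 1" by simp
  show "continuous (at z within sphere 0 1) (fe a v e)"
  proof (cases "z = 1")
    case False
    have "isCont (fe a v e) z" unfolding fe_def phie_def
      using Fa_cont[OF z False] e by (intro continuous_intros) auto
    thus ?thesis by (rule continuous_at_imp_continuous_within)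
  next
    case True
    show ?thesis unfolding continuous_within_eps_delta
    proof (intro allI impI)
      fix r :: real assume r: "r > 0"
      show "\<exists>d>0. \<forall>w\<in>sphere 0 1. dist w z < d \<longrightarrow> dist (fe a v e w) (fe a v e z) < r"
      proof (intro exI[of _ "r * e / 2"] conjI ballI impI)
        show "r * e / 2 > 0" using r e by simp
        fix w :: complex assume w: "w \<in> sphere 0 1" and d: "dist w z < r * e / 2"
        have wn: "norm w = 1" using w by simp
        have p: "0 \<le> phie e w" "phie e w \<le> norm (w - 1) / e" using e by (auto simp: phie_def)
        have "fe a v e w - v = complex_of_real (phie e w) * (Fa a w - v)"
          by (simp add: fe_def algebra_simps)
        hence "norm (fe a v e w - v) = phie e w * norm (Fa a w - v)" using p by (simp add: norm_mult)
        also have "\<dots> \<le> (norm (w - 1) / e) * 2"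
        proof (intro mult_mono p)
          show "norm (Fa a w - v) \<le> 2" using norm_triangle_ineq4[of "Fa a w" v] Fa_norm[OF wn] v by simp
        qed (use e in auto)
        also have "\<dots> < r"
        proof -
          have "norm (w - 1) < r * e / 2" using d True by (simp add: dist_norm)
          thus ?thesis using e by (simp add: field_simps)
        qed
        finally show "dist (fe a v e w) (fe a v e z) < r" using True by (simp add: fe_1 dist_norm)
      qed
    qed
  qed
qed

lemma cis_ne_1: "0 < t \<Longrightarrow> t < 1 \<Longrightarrow> cis (2 * pi * t) \<noteq> 1"
proof
  assume t: "0 < t" "t < 1" and "cis (2 * pi * t) = 1"
  hence "cos (2 * pi * t) = 1" by (simp add: complex_eq_iff)
  then obtain n :: int where n: "2 * pi * t = real_of_int n * 2 * pi" using cos_one_2pi_int by blast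
  hence tn: "t = real_of_int n" by simp
  from tn t have "0 < n" "n < 1" by simp_all
  thus False by simp
qed

lemma circle_approx:
  fixes a :: real and v :: complex
  assumes v: "norm v \<le> 1"
  obtains p :: "nat \<Rightarrow> complex \<Rightarrow> complex" where
    "\<And>N. polynomial_function (p N)"
    "\<And>N z. norm z = 1 \<Longrightarrow> norm (p N z) \<le> 2"
    "\<And>t. 0 < t \<Longrightarrow> t < 1 \<Longrightarrow> (\<lambda>N. p N (cis (2 * pi * t))) \<longlonglongrightarrow> cis (2 * pi * a * t)"
    "(\<lambda>N. p N 1) \<longlonglongrightarrow> v"
proof -
  define e where "e = (\<lambda>N::nat. inverse (real (Suc N)))"
  have e0: "e N > 0" for N by (simp add: e_def)
  have e1: "e N \<le> 1" for N by (simp add: e_def inverse_le_1_iff)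
  have "\<forall>N. \<exists>g. polynomial_function g \<and> (\<forall>z\<in>sphere 0 1. norm (fe a v (e N) z - g z) < e N)"
    using Stone_Weierstrass_polynomial_function[OF compact_sphere fe_cont[OF e0 v]] e0 by blast
  then obtain p where p: "\<And>N. polynomial_function (p N)"
    "\<And>N z. z \<in> sphere 0 1 \<Longrightarrow> norm (fe a v (e N) z - p N z) < e N" by metis
  show ?thesis
  proof (rule that[of p])
    show "polynomial_function (p N)" for N by (rule p)
    show "norm (p N z) \<le> 2" if z: "norm z = 1" for N z
    proof -
      have "norm (p N z) \<le> norm (fe a v (e N) z) + norm (fe a v (e N) z - p N z)"
        by (metis add_diff_cancel_left' diff_add_cancel norm_triangle_ineq4 add.commute norm_minus_commute order_trans norm_triangle_ineq)
      also have "\<dots> \<le> 1 + 1" using fe_norm[OF e0 z v] p(2)[of z N] e1[of N] z by (intro add_mono) auto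
      finally show ?thesis by simp
    qed
    show "(\<lambda>N. p N (cis (2 * pi * t))) \<longlonglongrightarrow> cis (2 * pi * a * t)" if t: "0 < t" "t < 1" for t
    proof -
      define z where "z = cis (2 * pi * t)"
      have z1: "z \<noteq> 1" using cis_ne_1[OF t] by (simp add: z_def)
      have zn: "norm z = 1" by (simp add: z_def)
      have d: "norm (z - 1) > 0" using z1 by simp
      have "eventually (\<lambda>N. inverse (real (Suc N)) < norm (z - 1)) sequentially"
        by (rule order_tendstoD(2)[OF LIMSEQ_inverse_real_of_nat d])
      hence ev: "eventually (\<lambda>N. e N \<le> norm (z - 1)) sequentially"
        unfolding e_def by (rule eventually_mono) simp
      have "(\<lambda>N. p N z - Fa a z) \<longlonglongrightarrow> 0"
      proof (rule Lim_null_comparison)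
        show "eventually (\<lambda>N. norm (p N z - Fa a z) \<le> e N) sequentially"
          using ev
        proof eventually_elim
          case (elim N)
          have "Fa a z = fe a v (e N) z" using fe_far[OF e0 elim] by simp
          thus ?case using p(2)[of z N] zn by (simp add: norm_minus_commute)
        qed
        show "e \<longlonglongrightarrow> 0" unfolding e_def by (rule LIMSEQ_inverse_real_of_nat)
      qed
      hence "(\<lambda>N. p N z) \<longlonglongrightarrow> Fa a z" by (rule LIM_zero_cancel)
      thus ?thesis using Fa_cis[OF t] by (simp add: z_def)
    qed
    show "(\<lambda>N. p N 1) \<longlonglongrightarrow> v"
    proof -
      have "(\<lambda>N. p N 1 - v) \<longlonglongrightarrow> 0"
      proof (rule Lim_null_comparison)
        show "eventually (\<lambda>N. norm (p N 1 - v) \<le> e N) sequentially"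
          using p(2)[of 1] by (auto simp: fe_1 norm_minus_commute less_imp_le)
        show "e \<longlonglongrightarrow> 0" unfolding e_def by (rule LIMSEQ_inverse_real_of_nat)
      qed
      thus ?thesis by (rule LIM_zero_cancel)
    qed
  qed
qed



lemma cis_prod: "finite I \<Longrightarrow> (\<Prod>i\<in>I. cis (f i)) = cis (\<Sum>i\<in>I. f i)"
  by (induction I rule: finite_induct) (simp_all add: cis_mult)

theorem corollary4p3:
  fixes m :: "nat \<Rightarrow> 'n::finite \<Rightarrow> nat"
    and B :: "nat \<Rightarrow> (nat ^ 'n) set"
    and \<nu> :: "(real ^ 'n) measure"
  assumes D: "\<And>k. k \<ge> 1 \<Longrightarrow> in_D m B k"
    and \<nu>_borel: "sets \<nu> = sets borel"
    and \<nu>_prob: "prob_space \<nu>"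
    and \<nu>_lim: "weak_conv_Rd (\<lambda>k. measure_pmf (fin_conv m B k)) \<nu>"
  shows "Zset \<nu> = {}"
proof -
  interpret L: lim_setting m B \<nu>
    by (intro lim_setting.intro setting.intro lim_setting_axioms.intro D \<nu>_borel \<nu>_prob \<nu>_lim)
  interpret P: prob_space \<nu> by (rule \<nu>_prob)
  have False if \<xi>: "\<xi> \<in> Zset \<nu>" for \<xi>
  proof -
    have Z: "\<And>k :: real ^ 'n. (\<forall>i. k $ i \<in> \<int>) \<Longrightarrow> fourier \<nu> (\<xi> + k) = 0"
      using \<xi> unfolding Zset_def by blast
    define c where "c = (\<lambda>i. AE x in \<nu>. x $ i < 1)"
    define v where "v = (\<lambda>i. if c i then 1 else cis (2 * pi * \<xi> $ i))"
    have vn: "norm (v i) \<le> 1" for i by (simp add: v_def)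
    have "\<forall>i. \<exists>p :: nat \<Rightarrow> complex \<Rightarrow> complex. (\<forall>N. polynomial_function (p N)) \<and>
        (\<forall>N z. norm z = 1 \<longrightarrow> norm (p N z) \<le> 2) \<and>
        (\<forall>t. 0 < t \<and> t < 1 \<longrightarrow> (\<lambda>N. p N (cis (2 * pi * t))) \<longlonglongrightarrow> cis (2 * pi * (\<xi> $ i) * t)) \<and>
        (\<lambda>N. p N 1) \<longlonglongrightarrow> v i"
    proof
      fix i
      obtain p :: "nat \<Rightarrow> complex \<Rightarrow> complex" where
        "\<And>N. polynomial_function (p N)"
        "\<And>N z. norm z = 1 \<Longrightarrow> norm (p N z) \<le> 2"
        "\<And>t. 0 < t \<Longrightarrow> t < 1 \<Longrightarrow> (\<lambda>N. p N (cis (2 * pi * t))) \<longlonglongrightarrow> cis (2 * pi * (\<xi> $ i) * t)"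
        "(\<lambda>N. p N 1) \<longlonglongrightarrow> v i"
        using circle_approx[OF vn[of i], of "\<xi> $ i"] by blast
      thus "\<exists>p :: nat \<Rightarrow> complex \<Rightarrow> complex. (\<forall>N. polynomial_function (p N)) \<and>
        (\<forall>N z. norm z = 1 \<longrightarrow> norm (p N z) \<le> 2) \<and>
        (\<forall>t. 0 < t \<and> t < 1 \<longrightarrow> (\<lambda>N. p N (cis (2 * pi * t))) \<longlonglongrightarrow> cis (2 * pi * (\<xi> $ i) * t)) \<and>
        (\<lambda>N. p N 1) \<longlonglongrightarrow> v i" by blast
    qed
    from choice[OF this] obtain p :: "'n \<Rightarrow> nat \<Rightarrow> complex \<Rightarrow> complex" where pp: "\<forall>i. (\<forall>N. polynomial_function (p i N)) \<and>
        (\<forall>N z. norm z = 1 \<longrightarrow> norm (p i N z) \<le> 2) \<and>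
        (\<forall>t. 0 < t \<and> t < 1 \<longrightarrow> (\<lambda>N. p i N (cis (2 * pi * t))) \<longlonglongrightarrow> cis (2 * pi * (\<xi> $ i) * t)) \<and>
        (\<lambda>N. p i N 1) \<longlonglongrightarrow> v i" by blast
    have p1: "\<And>i N. polynomial_function (p i N)" using pp by blast
    have p2: "\<And>i N z. norm z = 1 \<Longrightarrow> norm (p i N z) \<le> 2" using pp by blast
    have p3: "\<And>i t. 0 < t \<Longrightarrow> t < 1 \<Longrightarrow> (\<lambda>N. p i N (cis (2 * pi * t))) \<longlonglongrightarrow> cis (2 * pi * (\<xi> $ i) * t)" using pp by blast
    have p4: "\<And>i. (\<lambda>N. p i N 1) \<longlonglongrightarrow> v i" using pp by blast
    define T where "T = (\<lambda>N x. \<Prod>i\<in>UNIV. p i N (cis (2 * pi * (x $ i))))"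
    define s where "s = (\<lambda>N x. cis (- 2 * pi * (\<xi> \<bullet> x)) * T N x)"
    have tpT: "tp (T N)" for N unfolding T_def by (intro tp_prod poly_tp p1) auto
    have int0: "integral\<^sup>L \<nu> (s N) = 0" for N unfolding s_def by (rule L.tp_int[OF Z tpT]) auto
    have Tb: "norm (T N x) \<le> 2 ^ CARD('n)" for N x
    proof -
      have "norm (T N x) \<le> (\<Prod>i\<in>UNIV. norm (p i N (cis (2 * pi * (x $ i)))))"
        unfolding T_def by (rule norm_prod_le)
      also have "\<dots> \<le> (\<Prod>i\<in>(UNIV::'n set). 2)" by (intro prod_mono) (auto intro: p2)
      finally show ?thesis by simp
    qed
    have sb: "norm (s N x) \<le> 2 ^ CARD('n)" for N x using Tb[of N x] by (simp add: s_def norm_mult)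
    have scont: "continuous_on UNIV (s N)" for N
      using tp_bnd[OF tpT[of N]] unfolding s_def by (auto intro!: continuous_intros)
    have AEc: "AE x in \<nu>. \<forall>i\<in>UNIV. 0 \<le> x $ i \<and> x $ i \<le> 1 \<and> (if c i then x $ i < 1 else x $ i > 0)"
    proof (rule AE_finite_allI, simp)
      fix i
      have "AE x in \<nu>. (if c i then x $ i < 1 else x $ i > 0)"
      proof (cases "c i")
        case True thus ?thesis by (simp add: c_def)
      next
        case False thus ?thesis using L.endpoint[of i] by (simp add: c_def)
      qed
      thus "AE x in \<nu>. 0 \<le> x $ i \<and> x $ i \<le> 1 \<and> (if c i then x $ i < 1 else x $ i > 0)"
        using L.AE_cube[of i] by eventually_elim auto
    qed
    have lim: "AE x in \<nu>. (\<lambda>N. s N x) \<longlonglongrightarrow> 1"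
      using AEc
    proof eventually_elim
      case (elim x)
      have li: "(\<lambda>N. p i N (cis (2 * pi * (x $ i)))) \<longlonglongrightarrow> cis (2 * pi * (\<xi> $ i) * (x $ i))" for i
      proof -
        have x: "0 \<le> x $ i" "x $ i \<le> 1" "if c i then x $ i < 1 else x $ i > 0" using elim by auto
        show ?thesis
        proof (cases "0 < x $ i \<and> x $ i < 1")
          case True thus ?thesis using p3 by blast
        next
          case False
          show ?thesis
          proof (cases "c i")
            case True
            hence "x $ i = 0" using x False by auto
            thus ?thesis using p4[of i] True by (simp add: v_def)
          next
            case cF: False
            hence "x $ i = 1" using x False by auto
            moreover have "cis (2 * pi) = 1" by (simp add: complex_eq_iff)
            ultimately show ?thesis using p4[of i] cF by (simp add: v_def)
          qed
        qed
      qed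
      have "(\<lambda>N. T N x) \<longlonglongrightarrow> (\<Prod>i\<in>UNIV. cis (2 * pi * (\<xi> $ i) * (x $ i)))"
        unfolding T_def by (rule tendsto_prod) (rule li)
      also have "(\<Prod>i\<in>UNIV. cis (2 * pi * (\<xi> $ i) * (x $ i))) = cis (2 * pi * (\<xi> \<bullet> x))"
        by (simp add: cis_prod inner_vec_def sum_distrib_left mult.assoc)
      finally have "(\<lambda>N. s N x) \<longlonglongrightarrow> cis (- 2 * pi * (\<xi> \<bullet> x)) * cis (2 * pi * (\<xi> \<bullet> x))"
        unfolding s_def by (intro tendsto_mult tendsto_const)
      also have "cis (- 2 * pi * (\<xi> \<bullet> x)) * cis (2 * pi * (\<xi> \<bullet> x)) = 1" by (simp add: cis_mult)
      finally show ?case .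
    qed
    have "(\<lambda>N. integral\<^sup>L \<nu> (s N)) \<longlonglongrightarrow> integral\<^sup>L \<nu> (\<lambda>x. 1 :: complex)"
    proof (rule integral_dominated_convergence[where w="\<lambda>x. 2 ^ CARD('n)"])
      show "(\<lambda>x. 1 :: complex) \<in> borel_measurable \<nu>" by simp
      show "s N \<in> borel_measurable \<nu>" for N by (rule L.meas_nu[OF scont])
      show "integrable \<nu> (\<lambda>x. 2 ^ CARD('n) :: real)" by simp
      show "AE x in \<nu>. (\<lambda>N. s N x) \<longlonglongrightarrow> 1" by (rule lim)
      show "AE x in \<nu>. norm (s N x) \<le> 2 ^ CARD('n)" for N using sb by simp
    qed
    moreover have "integral\<^sup>L \<nu> (\<lambda>x. 1 :: complex) = 1" by (simp add: P.prob_space)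
    ultimately have "(\<lambda>N. 0 :: complex) \<longlonglongrightarrow> 1" using int0 by simp
    thus False using LIMSEQ_unique[OF tendsto_const] by fastforce
  qed
  thus ?thesis by blast
qed


end
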